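(* Let $\bm\theta = (\theta^1,\dots,\theta^k) \in (0,1)^k$ with a unique best treatment $d^* = \arg\max_d \theta^d$. Then \[ \Gamma^*(\bm\theta) \ge \frac{1}{4 H(\bm\theta)}, \qquad \text{where } H(\bm\theta) = \sum_{d \ne d^*} \frac{1}{(\theta^{d^*} - \theta^d)^2}. \]
   Context: Let $d_{\mathrm{KL}}(p,q) = p\log(p/q) + (1-p)\log((1-p)/(1-q))$ be the KL divergence between Bernoulli distributions with means $p$ and $q$. For allocation shares $\bm\rho = (\rho^1,\dots,\rho^k)$ and $j \neq d^*$ define $G_j(\rho^{d^*},\rho^j) = \min_{x \in [\theta^j, \theta^{d^*}]} \rho^{d^*} d_{\mathrm{KL}}(x,\theta^{d^*}) + \rho^j d_{\mathrm{KL}}(x,\theta^j)$. Then $\Gamma^*(\bm\theta)$ is the optimal value of the problem: maximize $\Gamma$ over $\Gamma$ and $\bm\rho$ subject to $G_j(\rho^{d^*},\rho^j) - \Gamma \ge 0$ for all $j \ne d^*$, $\sum_{i=1}^k \rho^i = 1$, $\rho^{d^*} = 1/2$, and $\rho^j \ge 0$ for all $j$. *)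

theory Defs
  imports "HOL-Analysis.Analysis"
begin

definition dKL :: "real \<Rightarrow> real \<Rightarrow> real" where
  "dKL p q = p * ln (p / q) + (1 - p) * ln ((1 - p) / (1 - q))"

definition G :: "(nat \<Rightarrow> real) \<Rightarrow> nat \<Rightarrow> (nat \<Rightarrow> real) \<Rightarrow> nat \<Rightarrow> real" where
  "G \<theta> dstar \<rho> j =
     (INF x\<in>{\<theta> j..\<theta> dstar}. \<rho> dstar * dKL x (\<theta> dstar) + \<rho> j * dKL x (\<theta> j))"

definition Gamma_star :: "nat \<Rightarrow> (nat \<Rightarrow> real) \<Rightarrow> nat \<Rightarrow> real" where
  "Gamma_star k \<theta> dstar = Sup {\<Gamma>. \<exists>\<rho>.
      (\<forall>j\<in>{1..k}. j \<noteq> dstar \<longrightarrow> G \<theta> dstar \<rho> j - \<Gamma> \<ge> 0)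
    \<and> (\<Sum>i=1..k. \<rho> i) = 1
    \<and> \<rho> dstar = 1/2
    \<and> (\<forall>j\<in>{1..k}. \<rho> j \<ge> 0)}"

definition H :: "nat \<Rightarrow> (nat \<Rightarrow> real) \<Rightarrow> nat \<Rightarrow> real" where
  "H k \<theta> dstar = (\<Sum>d\<in>{1..k} - {dstar}. 1 / (\<theta> dstar - \<theta> d)^2)"

end

theory Submission
  imports Defs
begin

lemma dKL_sq:
  fixes p q :: real
  assumes p: "0 < p" "p < 1" and q: "0 < q" "q < 1"
  shows "dKL p q \<ge> (p - q)^2"
proof -
  define h where "h = (\<lambda>t::real. - p * ln t - (1 - p) * ln (1 - t) - (p - t)^2)"
  define h' where "h' = (\<lambda>t::real. - p / t + (1 - p) / (1 - t) + 2 * (p - t))"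
  have der: "DERIV h t :> h' t" if "0 < t" "t < 1" for t
    unfolding h_def h'_def
    apply (insert that) apply (rule derivative_eq_intros refl | simp)+ done
  have key: "h' t * (t - p) \<ge> 0" if "0 < t" "t < 1" for t
  proof -
    have "0 \<le> (t - 1/2)^2" by simp
    then have tt: "t * (1 - t) \<le> 1/2" by (simp add: power2_eq_square algebra_simps)
    have pos: "t * (1 - t) > 0" using that by simp
    have ge2: "1 / (t * (1 - t)) \<ge> 2" using tt pos by (simp add: le_divide_eq)
    have eq: "h' t = (t - p) * (1 / (t * (1 - t)) - 2)"
      unfolding h'_def using that by (simp add: field_simps)
    have "h' t * (t - p) = (t - p)^2 * (1 / (t * (1 - t)) - 2)"
      by (simp add: eq power2_eq_square)
    also have "\<dots> \<ge> 0" using ge2 by simp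
    finally show ?thesis .
  qed
  have hq: "dKL p q - (p - q)^2 = h q - h p"
    unfolding dKL_def h_def using p q by (simp add: ln_div algebra_simps)
  have "h q - h p \<ge> 0"
  proof (cases "q = p")
    case True then show ?thesis by simp
  next
    case False
    show ?thesis
    proof (cases "q < p")
      case True
      obtain z where z: "q < z" "z < p" "h p - h q = (p - q) * h' z"
        using MVT2[of q p h h', OF True der] p q by force
      have "h' z * (z - p) \<ge> 0" using key z p q by simp
      then have "h' z \<le> 0" using z by (simp add: mult_le_0_iff zero_le_mult_iff)
      then have "(p - q) * h' z \<le> 0" using z by (intro mult_nonneg_nonpos) auto
      then show ?thesis using z by linarith
    next
      case False
      then have pq: "p < q" using \<open>q \<noteq> p\<close> by simp
      obtain z where z: "p < z" "z < q" "h q - h p = (q - p) * h' z"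
        using MVT2[of p q h h', OF pq der] p q by force
      have "h' z * (z - p) \<ge> 0" using key z p q by simp
      then have "h' z \<ge> 0" using z by (simp add: zero_le_mult_iff)
      then show ?thesis using z pq by simp
    qed
  qed
  then show ?thesis using hq by simp
qed


lemma dKL_self: "dKL p p = 0"
  unfolding dKL_def by simp

theorem lemma1:
  fixes k :: nat and \<theta> :: "nat \<Rightarrow> real" and dstar :: nat
  assumes "k \<ge> 2"
    and "\<forall>d\<in>{1..k}. 0 < \<theta> d \<and> \<theta> d < 1"
    and "dstar \<in> {1..k}"
    and "\<forall>d\<in>{1..k}. d \<noteq> dstar \<longrightarrow> \<theta> d < \<theta> dstar"
  shows "Gamma_star k \<theta> dstar \<ge> 1 / (4 * H k \<theta> dstar)"
proof -
  note th = assms(2) and ds = assms(3) and lt = assms(4)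
  define D where "D = {1..k} - {dstar}"
  define W where "W = H k \<theta> dstar"
  have finD: "finite D" unfolding D_def by simp
  obtain j0 where j0: "j0 \<in> {1..k}" "j0 \<noteq> dstar"
  proof
    show "(if dstar = 1 then 2 else 1) \<in> {1..k}" using assms(1) ds by auto
    show "(if dstar = 1 then 2 else 1) \<noteq> dstar" by auto
  qed
  have j0D: "j0 \<in> D" using j0 unfolding D_def by auto
  have Wdef: "W = (\<Sum>d\<in>D. 1 / (\<theta> dstar - \<theta> d)^2)" unfolding W_def H_def D_def by simp
  have Wge: "W \<ge> 1 / (\<theta> dstar - \<theta> j)^2" if "j \<in> D" for j
    unfolding Wdef by (rule member_le_sum[OF that _ finD]) simp
  have Wpos: "W > 0"
  proof -
    have "\<theta> dstar - \<theta> j0 > 0" using lt j0 by auto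
    then have "1 / (\<theta> dstar - \<theta> j0)^2 > 0" by simp
    then show ?thesis using Wge[OF j0D] by linarith
  qed
  define \<rho> where "\<rho> = (\<lambda>i. if i = dstar then 1/2 else if i \<in> {1..k}
      then 1 / (2 * W * (\<theta> dstar - \<theta> i)^2) else (0::real))"
  define S where "S = {\<Gamma>. \<exists>\<rho>.
      (\<forall>j\<in>{1..k}. j \<noteq> dstar \<longrightarrow> G \<theta> dstar \<rho> j - \<Gamma> \<ge> 0)
    \<and> (\<Sum>i=1..k. \<rho> i) = 1
    \<and> \<rho> dstar = 1/2
    \<and> (\<forall>j\<in>{1..k}. \<rho> j \<ge> 0)}"
  have rsum: "(\<Sum>i=1..k. \<rho> i) = 1"
  proof -
    have "(\<Sum>i=1..k. \<rho> i) = \<rho> dstar + (\<Sum>i\<in>D. \<rho> i)"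
      unfolding D_def using ds by (simp add: sum.remove)
    also have "(\<Sum>i\<in>D. \<rho> i) = (\<Sum>i\<in>D. (1 / (2 * W)) * (1 / (\<theta> dstar - \<theta> i)^2))"
      by (rule sum.cong) (auto simp: \<rho>_def D_def)
    also have "\<dots> = (1 / (2 * W)) * W" unfolding Wdef by (simp add: sum_distrib_left)
    also have "\<dots> = 1/2" using Wpos by simp
    finally show ?thesis by (simp add: \<rho>_def)
  qed
  have rnn: "\<forall>j\<in>{1..k}. \<rho> j \<ge> 0" using Wpos by (auto simp: \<rho>_def)
  have Gge: "G \<theta> dstar \<rho> j \<ge> 1 / (4 * W)" if jD: "j \<in> D" for j
  proof -
    have j: "j \<in> {1..k}" "j \<noteq> dstar" using jD unfolding D_def by auto
    define \<Delta> where "\<Delta> = \<theta> dstar - \<theta> j"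
    have \<Delta>pos: "\<Delta> > 0" using lt j unfolding \<Delta>_def by auto
    have rj: "\<rho> j = 1 / (2 * W * \<Delta>^2)" using j unfolding \<rho>_def \<Delta>_def by simp
    have W1: "W * \<Delta>^2 \<ge> 1" using Wge[OF jD] \<Delta>pos unfolding \<Delta>_def[symmetric]
      by (simp add: divide_le_eq)
    have rj_le: "\<rho> j \<le> 1/2" unfolding rj using W1 Wpos \<Delta>pos
      by (simp add: divide_le_eq field_simps)
    have rj_nn: "\<rho> j \<ge> 0" using rnn j by auto
    have rjD: "\<rho> j * \<Delta>^2 = 1 / (2 * W)" unfolding rj using \<Delta>pos Wpos by (simp add: field_simps)
    have ne: "{\<theta> j..\<theta> dstar} \<noteq> {}" using \<Delta>pos unfolding \<Delta>_def by simp
    show ?thesis unfolding G_def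
    proof (rule cINF_greatest[OF ne])
      fix x assume x: "x \<in> {\<theta> j..\<theta> dstar}"
      have x01: "0 < x" "x < 1" using x th j ds by force+
      have ds01: "0 < \<theta> dstar" "\<theta> dstar < 1" using th ds by auto
      have j01: "0 < \<theta> j" "\<theta> j < 1" using th j by auto
      have k1: "dKL x (\<theta> dstar) \<ge> (x - \<theta> dstar)^2" by (rule dKL_sq; fact)
      have k2: "dKL x (\<theta> j) \<ge> (x - \<theta> j)^2" by (rule dKL_sq; fact)
      define u where "u = \<theta> dstar - x"
      define v where "v = x - \<theta> j"
      have uv: "u + v = \<Delta>" unfolding u_def v_def \<Delta>_def by simp
      have "\<rho> dstar * dKL x (\<theta> dstar) + \<rho> j * dKL x (\<theta> j)
          \<ge> (1/2) * u^2 + \<rho> j * v^2"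
        using k1 k2 rj_nn unfolding u_def v_def
        by (simp add: \<rho>_def power2_commute mult_left_mono add_mono)
      moreover have "(1/2) * u^2 + \<rho> j * v^2 \<ge> \<rho> j * (u^2 + v^2)"
      proof -
        have "\<rho> j * u^2 \<le> (1/2) * u^2" using rj_le by (rule mult_right_mono) simp
        then show ?thesis by (simp add: algebra_simps)
      qed
      moreover have "u^2 + v^2 \<ge> \<Delta>^2 / 2"
      proof -
        have "0 \<le> (u - v)^2" by simp
        then show ?thesis unfolding uv[symmetric] by (simp add: power2_eq_square algebra_simps)
      qed
      then have "\<rho> j * (u^2 + v^2) \<ge> \<rho> j * (\<Delta>^2 / 2)"
        using rj_nn by (intro mult_left_mono)
      moreover have "\<rho> j * (\<Delta>^2 / 2) = 1 / (4 * W)" using rjD by simp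
      ultimately show "1 / (4 * W) \<le> \<rho> dstar * dKL x (\<theta> dstar) + \<rho> j * dKL x (\<theta> j)"
        by linarith
    qed
  qed
  have mem: "1 / (4 * W) \<in> S"
    unfolding S_def
  proof (intro CollectI exI[of _ \<rho>] conjI ballI impI)
    fix j assume "j \<in> {1..k}" "j \<noteq> dstar"
    then have "j \<in> D" unfolding D_def by auto
    then show "G \<theta> dstar \<rho> j - 1 / (4 * W) \<ge> 0" using Gge by force
  qed (use rsum rnn in \<open>auto simp: \<rho>_def\<close>)
  have bdd: "bdd_above S"
  proof (rule bdd_aboveI)
    fix \<Gamma> assume "\<Gamma> \<in> S"
    then obtain r where r: "G \<theta> dstar r j0 - \<Gamma> \<ge> 0" "r dstar = 1/2" "\<forall>j\<in>{1..k}. r j \<ge> 0"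
      unfolding S_def using j0 by blast
    have j001: "0 < \<theta> j0" "\<theta> j0 < 1" using th j0 by auto
    have ds01: "0 < \<theta> dstar" "\<theta> dstar < 1" using th ds by auto
    have rj0: "r j0 \<ge> 0" using r j0 by auto
    have bb: "bdd_below ((\<lambda>x. r dstar * dKL x (\<theta> dstar) + r j0 * dKL x (\<theta> j0)) ` {\<theta> j0..\<theta> dstar})"
    proof (rule bdd_belowI[of _ 0], clarsimp)
      fix x assume x: "\<theta> j0 \<le> x" "x \<le> \<theta> dstar"
      have x01: "0 < x" "x < 1" using x j001 ds01 by linarith+
      have "dKL x (\<theta> dstar) \<ge> 0" using dKL_sq[OF x01 ds01] by (smt (verit) zero_le_power2)
      moreover have "dKL x (\<theta> j0) \<ge> 0" using dKL_sq[OF x01 j001] by (smt (verit) zero_le_power2)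
      ultimately show "0 \<le> r dstar * dKL x (\<theta> dstar) + r j0 * dKL x (\<theta> j0)"
        using r(2) rj0 by simp
    qed
    have "G \<theta> dstar r j0 \<le> r dstar * dKL (\<theta> j0) (\<theta> dstar) + r j0 * dKL (\<theta> j0) (\<theta> j0)"
      unfolding G_def
      by (rule cINF_lower[OF bb]) (use lt j0 in auto)
    then have "G \<theta> dstar r j0 \<le> 1/2 * dKL (\<theta> j0) (\<theta> dstar)"
      using r(2) by (simp add: dKL_self)
    then show "\<Gamma> \<le> 1/2 * dKL (\<theta> j0) (\<theta> dstar)" using r(1) by linarith
  qed
  have "1 / (4 * W) \<le> Sup S" by (rule cSup_upper[OF mem bdd])
  then show ?thesis unfolding Gamma_star_def W_def S_def by simp
qed

end
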